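(* Consider a binary treatment variable $X\in\{0,1\}$, a binary "intention to treat" variable $X^*\in\{0,1\}$, and a discrete response variable $Y$, under an observational regime and, for $x\in\{0,1\}$, an interventional regime "$X\leftarrow x$". Write $\Pr(\cdot)$ for observational probabilities and $\Pr(\cdot\mid X\leftarrow x)$ for probabilities under intervention $X\leftarrow x$. Assume: (i) in the observational regime $X=X^*$; (ii) $\Pr(X^*=x^*\mid X\leftarrow x)=\Pr(X^*=x^* )$ for all $x,x^*\in\{0,1\}$, where $\Pr(X^*=x^* )=\Pr(X=x^* )$; (iii) $\Pr(Y=y\mid X^*=x,X=x)=\Pr(Y=y\mid X^*=x,X\leftarrow x)$ for all $x\in\{0,1\}$ and all $y$. Suppose the observational joint distribution of $(X,Y)$ is known with $0<\Pr(X=1)<1$, and the distribution of $Y$ under each intervention $X\leftarrow x$ ($x=0,1$) is known. Then, for each $x\in\{0,1\}$, the joint distribution of $(X^*,Y)$ under the intervention $X\leftarrow x$ is identified, i.e. uniquely determined by these known quantities.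
   Context: $X^*$ ("intention to treat") denotes the treatment a patient or their doctor would choose if unconstrained; it is a pre-treatment covariate. In the interventional regime $X\leftarrow x$, treatment $x$ is imposed externally without regard to $X^*$. "Identified" means uniquely determined by the observational joint distribution of $(X,Y)$ together with the interventional distributions of $Y$. *)

theory Defs
  imports "HOL-Probability.Probability"
begin

text \<open>A causal model for (X*, X, Y): the observational regime is a joint pmf P on
  triples (X*, X, Y); for each x, the interventional regime X <- x is a joint pmf Q x on
  pairs (X*, Y). Treatment and intention to treat are binary (bool), Y is discrete
  (any type, pmfs have countable support).\<close>

definition model_assumptions ::
  "(bool \<times> bool \<times> 'y) pmf \<Rightarrow> (bool \<Rightarrow> (bool \<times> 'y) pmf) \<Rightarrow> bool" where
  "model_assumptions P Q \<longleftrightarrow>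
     \<comment> \<open>(i) observationally X = X*\<close>
     (\<forall>(s, x, y) \<in> set_pmf P. s = x) \<and>
     \<comment> \<open>(ii) Pr(X* = s | X <- x) = Pr(X* = s)\<close>
     (\<forall>x s. measure_pmf.prob (Q x) {(s', y'). s' = s} =
            measure_pmf.prob P {(s', x', y'). s' = s}) \<and>
     \<comment> \<open>(iii) Pr(Y = y | X* = x, X = x) = Pr(Y = y | X* = x, X <- x)\<close>
     (\<forall>x y. measure_pmf.prob P {(s', x', y'). s' = x \<and> x' = x \<and> y' = y}
              / measure_pmf.prob P {(s', x', y'). s' = x \<and> x' = x}
           = measure_pmf.prob (Q x) {(s', y'). s' = x \<and> y' = y}
              / measure_pmf.prob (Q x) {(s', y'). s' = x})"

definition obs_XY :: "(bool \<times> bool \<times> 'y) pmf \<Rightarrow> (bool \<times> 'y) pmf" where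
  "obs_XY P = map_pmf (\<lambda>(s, x, y). (x, y)) P"

definition int_Y :: "(bool \<Rightarrow> (bool \<times> 'y) pmf) \<Rightarrow> bool \<Rightarrow> 'y pmf" where
  "int_Y Q x = map_pmf snd (Q x)"

end

theory Submission
  imports Defs
begin

lemma meas_cong_supp:
  assumes "\<And>z. z \<in> set_pmf p \<Longrightarrow> (z \<in> A \<longleftrightarrow> z \<in> B)"
  shows "measure_pmf.prob p A = measure_pmf.prob p B"
proof -
  have "A \<inter> set_pmf p = B \<inter> set_pmf p" using assms by blast
  then show ?thesis by (metis measure_Int_set_pmf)
qed

lemma key:
  fixes P :: "(bool \<times> bool \<times> 'y) pmf" and Q :: "bool \<Rightarrow> (bool \<times> 'y) pmf"
  assumes M: "model_assumptions P Q"
    and pos: "0 < measure_pmf.prob (obs_XY P) {(x', y). x' = x}"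
  shows "pmf (Q x) (x, y) = pmf (obs_XY P) (x, y)"
proof -
  have supp: "\<forall>(s, x, y) \<in> set_pmf P. s = x"
    and ii: "\<forall>x s. measure_pmf.prob (Q x) {(s', y'). s' = s} =
            measure_pmf.prob P {(s', x', y'). s' = s}"
    and iii: "\<forall>x y. measure_pmf.prob P {(s', x', y'). s' = x \<and> x' = x \<and> y' = y}
              / measure_pmf.prob P {(s', x', y'). s' = x \<and> x' = x}
           = measure_pmf.prob (Q x) {(s', y'). s' = x \<and> y' = y}
              / measure_pmf.prob (Q x) {(s', y'). s' = x}"
    using M unfolding model_assumptions_def by auto
  let ?a = "measure_pmf.prob (obs_XY P) {(x', y). x' = x}"
  have e1: "measure_pmf.prob P {(s', x', y'). s' = x \<and> x' = x \<and> y' = y}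
      = pmf (obs_XY P) (x, y)"
  proof -
    have "pmf (obs_XY P) (x, y) = measure_pmf.prob P ((\<lambda>(s, x, y). (x, y)) -` {(x, y)})"
      unfolding obs_XY_def by (simp add: pmf_map)
    also have "\<dots> = measure_pmf.prob P {(s', x', y'). s' = x \<and> x' = x \<and> y' = y}"
      by (rule meas_cong_supp) (use supp in auto)
    finally show ?thesis by simp
  qed
  have e2: "measure_pmf.prob P {(s', x', y'). s' = x \<and> x' = x} = ?a"
  proof -
    have "?a = measure_pmf.prob P ((\<lambda>(s, x, y). (x, y)) -` {(x', y). x' = x})"
      unfolding obs_XY_def by (simp add: measure_map_pmf)
    also have "\<dots> = measure_pmf.prob P {(s', x', y'). s' = x \<and> x' = x}"
      by (rule meas_cong_supp) (use supp in auto)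
    finally show ?thesis by simp
  qed
  have e3: "measure_pmf.prob (Q x) {(s', y'). s' = x} = ?a"
  proof -
    have "measure_pmf.prob (Q x) {(s', y'). s' = x} = measure_pmf.prob P {(s', x', y'). s' = x}"
      using ii by blast
    also have "\<dots> = measure_pmf.prob P {(s', x', y'). s' = x \<and> x' = x}"
      by (rule meas_cong_supp) (use supp in auto)
    finally show ?thesis using e2 by simp
  qed
  have e4: "measure_pmf.prob (Q x) {(s', y'). s' = x \<and> y' = y} = pmf (Q x) (x, y)"
  proof -
    have "{(s', y'). s' = x \<and> y' = y} = {(x, y)}" by auto
    then show ?thesis by (simp add: measure_pmf_single)
  qed
  have "pmf (obs_XY P) (x, y) / ?a = pmf (Q x) (x, y) / ?a"
    using iii e1 e2 e3 e4 by metis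
  then show ?thesis using pos by (simp add: divide_cancel_right)
qed

lemma pmf_intY:
  "pmf (int_Y Q x) y = pmf (Q x) (True, y) + pmf (Q x) (False, y)"
proof -
  have "pmf (int_Y Q x) y = measure_pmf.prob (Q x) (snd -` {y})"
    unfolding int_Y_def by (simp add: pmf_map)
  also have "snd -` {y} = {(True, y), (False, y)}" by auto
  also have "measure_pmf.prob (Q x) {(True, y), (False, y)}
     = measure_pmf.prob (Q x) {(True, y)} + measure_pmf.prob (Q x) {(False, y)}"
    by (subst measure_pmf.finite_measure_eq_sum_singleton) auto
  finally show ?thesis by (simp add: measure_pmf_single)
qed

theorem corollary1:
  fixes P1 P2 :: "(bool \<times> bool \<times> 'y) pmf"
    and Q1 Q2 :: "bool \<Rightarrow> (bool \<times> 'y) pmf"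
  assumes "model_assumptions P1 Q1"
    and "model_assumptions P2 Q2"
    and "obs_XY P1 = obs_XY P2"
    and "0 < measure_pmf.prob (obs_XY P1) {(x, y). x = True}"
    and "measure_pmf.prob (obs_XY P1) {(x, y). x = True} < 1"
    and "\<And>x. int_Y Q1 x = int_Y Q2 x"
  shows "\<forall>x. Q1 x = Q2 x"
proof
  fix x
  have posx: "0 < measure_pmf.prob (obs_XY P1) {(x', y). x' = x}" for x
  proof (cases x)
    case True then show ?thesis using assms(4) by simp
  next
    case False
    have "{(x', y). x' = False} = UNIV - {(x', y::'y). x' = True}" by auto
    then have "measure_pmf.prob (obs_XY P1) {(x', y). x' = False}
       = 1 - measure_pmf.prob (obs_XY P1) {(x', y). x' = True}"
      by (metis measure_pmf.prob_compl sets_measure_pmf UNIV_I space_measure_pmf)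
    then show ?thesis using False assms(5) by simp
  qed
  have same: "pmf (Q1 x) (x, y) = pmf (Q2 x) (x, y)" for y
    using key[OF assms(1) posx] key[OF assms(2), of x] posx assms(3) by metis
  show "Q1 x = Q2 x"
  proof (rule pmf_eqI)
    fix z :: "bool \<times> 'y"
    obtain s y where z: "z = (s, y)" by (cases z)
    show "pmf (Q1 x) z = pmf (Q2 x) z"
    proof (cases "s = x")
      case True then show ?thesis using same z by simp
    next
      case False
      have "pmf (Q1 x) (s, y) = pmf (int_Y Q1 x) y - pmf (Q1 x) (x, y)"
        using pmf_intY[of Q1 x y] False by (cases x; cases s) auto
      moreover have "pmf (Q2 x) (s, y) = pmf (int_Y Q2 x) y - pmf (Q2 x) (x, y)"
        using pmf_intY[of Q2 x y] False by (cases x; cases s) auto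
      ultimately show ?thesis using same[of y] assms(6)[of x] z by simp
    qed
  qed
qed

end
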